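(* Let $q\ge 3$ be a prime power and $s,t$ integers with $1\le s<t\le q$ and $t-s\ge 2$. Then there exists a linear AOA$(s,t,q+1,q)$.
   Context: An orthogonal array OA$(t,k,v)$ (with $1\le t\le k$) is a $v^t\times k$ array with entries from a set $X$ of size $v$ such that, for every choice of $t$ of its columns, each $t$-tuple in $X^t$ appears exactly once as a row of the corresponding $v^t\times t$ subarray. For integers $1\le s\le t\le k$, an augmented orthogonal array AOA$(s,t,k,v)$ is a $v^t\times(k+1)$ array $A$ such that: (1) the first $k$ columns of $A$ form an OA$(t,k,v)$ on a symbol set $X$ of size $v$; (2) the last column of $A$ has entries from a set $Y$ of size $v^{t-s}$; (3) for any choice of $s$ of the first $k$ columns, these $s$ columns together with the last column contain every $(s+1)$-tuple of $X^s\times Y$ exactly once as a row. For a prime power $q$, an AOA$(s,t,k,q)$ is linear if $X=\mathbb{F}_q$, $Y=\mathbb{F}_q^{t-s}$, and its set of rows, regarded as vectors in $\mathbb{F}_q^{k}\times\mathbb{F}_q^{t-s}=\mathbb{F}_q^{k+t-s}$, is an $\mathbb{F}_q$-linear subspace. *)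

theory Defs
  imports Main "HOL-Library.FuncSet"
begin

text \<open>A linear augmented orthogonal array AOA(s,t,k,q) over the finite field 'a
  (q = CARD('a)).  Its rows are vectors in F_q^(k + (t-s)), represented as functions
  nat => 'a vanishing at indices >= k + (t-s).  Coordinates 0..k-1 are the first k
  columns (entries in X = F_q); coordinates k..k+(t-s)-1 together form the last column
  (entries in Y = F_q^(t-s)).
  Since the rows of an OA with these parameters are pairwise distinct, the array is
  given by its set of rows C, which has q^t elements.\<close>

definition last_col :: "nat \<Rightarrow> nat \<Rightarrow> nat \<Rightarrow> nat set" where
  "last_col s t k = {k..<k + (t - s)}"

definition linear_AOA :: "nat \<Rightarrow> nat \<Rightarrow> nat \<Rightarrow> (nat \<Rightarrow> 'a::{finite,field}) set \<Rightarrow> bool" where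
  "linear_AOA s t k C \<longleftrightarrow>
     1 \<le> s \<and> s \<le> t \<and> t \<le> k \<and>
     C \<subseteq> {x. \<forall>i\<ge>k + (t - s). x i = 0} \<and>
     (\<lambda>i. 0) \<in> C \<and> (\<forall>x\<in>C. \<forall>y\<in>C. (\<lambda>i. x i + y i) \<in> C) \<and> (\<forall>c. \<forall>x\<in>C. (\<lambda>i. c * x i) \<in> C) \<and>
     card C = card (UNIV :: 'a set) ^ t \<and>
     (\<forall>S. S \<subseteq> {0..<k} \<and> card S = t \<longrightarrow>
        bij_betw (\<lambda>x. restrict x S) C (S \<rightarrow>\<^sub>E UNIV)) \<and>
     (\<forall>S. S \<subseteq> {0..<k} \<and> card S = s \<longrightarrow>
        bij_betw (\<lambda>x. restrict x (S \<union> last_col s t k)) C ((S \<union> last_col s t k) \<rightarrow>\<^sub>E UNIV))"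

end

theory Submission
  imports Defs "HOL-Computational_Algebra.Polynomial"
begin

lemma card_polys:
  fixes t :: nat
  assumes that: "t \<ge> 1"
  shows "card {f :: 'a::{finite,field} poly. degree f < t} = card (UNIV :: 'a set) ^ t"
proof -
  have "bij_betw (\<lambda>f. restrict (coeff f) {0..<t}) {f :: 'a poly. degree f < t} ({0..<t} \<rightarrow>\<^sub>E UNIV)"
  proof (rule bij_betwI')
    fix f g :: "'a poly" assume f: "f \<in> {f. degree f < t}" and g: "g \<in> {f. degree f < t}"
    show "(restrict (coeff f) {0..<t} = restrict (coeff g) {0..<t}) = (f = g)"
    proof
      assume eq: "restrict (coeff f) {0..<t} = restrict (coeff g) {0..<t}"
      show "f = g"
      proof (rule poly_eqI)
        fix n show "coeff f n = coeff g n"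
        proof (cases "n < t")
          case True then show ?thesis using fun_cong[OF eq, of n] by simp
        next
          case False then show ?thesis using f g by (simp add: coeff_eq_0)
        qed
      qed
    qed simp
  next
    fix f :: "'a poly" assume "f \<in> {f. degree f < t}"
    then show "restrict (coeff f) {0..<t} \<in> {0..<t} \<rightarrow>\<^sub>E UNIV" by simp
  next
    fix c assume c: "c \<in> ({0..<t} \<rightarrow>\<^sub>E (UNIV :: 'a set))"
    define f where "f = (\<Sum>i<t. monom (c i) i)"
    have cf: "coeff f n = (if n < t then c n else 0)" for n
      unfolding f_def by (simp add: coeff_sum coeff_monom)
    have "degree f \<le> t - 1" by (rule degree_le) (use that in \<open>auto simp: cf\<close>)
    then have "degree f < t" using that by simp
    moreover have "c = restrict (coeff f) {0..<t}"
      using c by (auto simp: cf PiE_def extensional_def)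
    ultimately show "\<exists>f\<in>{f. degree f < t}. c = restrict (coeff f) {0..<t}" by blast
  qed
  then have "card {f :: 'a poly. degree f < t} = card ({0..<t} \<rightarrow>\<^sub>E (UNIV :: 'a set))"
    by (rule bij_betw_same_card)
  also have "\<dots> = card (UNIV :: 'a set) ^ t" by (simp add: card_PiE)
  finally show ?thesis .
qed

lemma rootless:
  assumes "d \<ge> 2"
  shows "\<exists>h :: 'a::{finite,field} poly. degree h = d \<and> (\<forall>x. poly h x \<noteq> 0)"
proof -
  define p :: "'a poly" where "p = monom 1 (d-1) * [:-1,1:]"
  have pp: "poly p x = x^(d-1) * (x - 1)" for x by (simp add: p_def poly_monom algebra_simps)
  have dp: "degree p = d" using assms unfolding p_def
    by (subst degree_mult_eq) (auto simp: degree_monom_eq)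
  have "\<not> inj (poly p)"
  proof
    assume "inj (poly p)"
    moreover have "poly p 0 = poly p 1" using assms by (simp add: pp)
    ultimately show False by (simp add: inj_eq)
  qed
  then have "\<not> surj (poly p)" using finite_UNIV_surj_inj[of "poly p"] by auto
  then obtain c where c: "\<forall>x. poly p x \<noteq> c" by (metis surjI)
  define h where "h = p + [:-c:]"
  have "degree h = d" unfolding h_def using dp assms by (subst degree_add_eq_left) auto
  moreover have "poly h x \<noteq> 0" for x using c[rule_format, of x] by (simp add: h_def)
  ultimately show ?thesis by blast
qed

lemma inj_to_bij:
  assumes "finite B" "inj_on (g \<circ> r) P" "(g \<circ> r) ` P \<subseteq> B" "card P = card B"
  shows "bij_betw g (r ` P) B"
proof -
  have i1: "inj_on g (r ` P)" using assms(2) by (rule inj_on_imageI)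
  have i2: "inj_on r P" using assms(2) by (rule inj_on_imageI2)
  have "card (g ` r ` P) = card B"
    using i1 i2 assms(4) by (simp add: card_image)
  moreover have "g ` r ` P \<subseteq> B" using assms(3) by (simp add: image_comp)
  ultimately have "g ` r ` P = B" using assms(1) by (intro card_subset_eq) auto
  then show ?thesis using i1 by (simp add: bij_betw_def)
qed


theorem theorem3p7:
  fixes s t :: nat
  assumes "card (UNIV :: 'a::{finite,field} set) \<ge> 3"
    and "1 \<le> s" and "s < t" and "t \<le> card (UNIV :: 'a set)" and "t - s \<ge> 2"
  shows "\<exists>C :: (nat \<Rightarrow> 'a) set. linear_AOA s t (card (UNIV :: 'a set) + 1) C"
proof -
  define q where "q = card (UNIV :: 'a set)"
  define d where "d = t - s"
  define k where "k = q + 1"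
  have d2: "d \<ge> 2" using assms by (simp add: d_def)
  have tq: "t \<le> q" using assms by (simp add: q_def)
  obtain e where e: "bij_betw e {0..<q} (UNIV :: 'a set)"
    using ex_bij_betw_nat_finite[of "UNIV :: 'a set"] by (auto simp: q_def)
  have einj: "inj_on e {0..<q}" using e by (simp add: bij_betw_def)
  obtain h :: "'a poly" where hdeg: "degree h = d" and hroot: "\<And>x. poly h x \<noteq> 0"
    using rootless[OF d2] by blast
  have hnz: "h \<noteq> 0" using hdeg d2 by auto
  define row where "row f i = (if i < q then poly f (e i) else if i = q then coeff f (t-1)
     else if i < q+1+d then coeff (f mod h) (i-(q+1)) else 0)" for f :: "'a poly" and i
  define P where "P = {f :: 'a poly. degree f < t}"
  define C where "C = row ` P"
  have cardP: "card P = q ^ t" unfolding P_def q_def using assms by (intro card_polys) auto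
  have row_diff: "row (f - g) i = row f i - row g i" for f g i
    by (simp add: row_def poly_mod_diff_left)
  have row_add: "row (f + g) i = row f i + row g i" for f g i
    by (simp add: row_def poly_mod_add_left)
  have row_smult: "row (smult c f) i = c * row f i" for f c i
    by (simp add: row_def mod_smult_left)
  have P_diff: "f - g \<in> P" if "f \<in> P" "g \<in> P" for f g
    using that degree_diff_le_max[of f g] unfolding P_def by auto
  have P_add: "f + g \<in> P" if "f \<in> P" "g \<in> P" for f g
    using that degree_add_le_max[of f g] unfolding P_def by auto
  have P_smult: "smult c f \<in> P" if "f \<in> P" for f c
    using that unfolding P_def by auto
  have roots: "card (e ` (S \<inter> {0..<q})) \<le> degree f" 
    if "f \<noteq> 0" "\<forall>i\<in>S \<inter> {0..<q}. poly f (e i) = 0" for f S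
  proof -
    have "e ` (S \<inter> {0..<q}) \<subseteq> {x. poly f x = 0}" using that by auto
    then have "card (e ` (S \<inter> {0..<q})) \<le> card {x. poly f x = 0}" by (intro card_mono) auto
    also have "\<dots> \<le> degree f" by (rule card_poly_roots_bound) (fact that)
    finally show ?thesis .
  qed
  have cardR: "card (e ` (S \<inter> {0..<q})) = card (S \<inter> {0..<q})" for S
    by (rule card_image) (rule inj_on_subset[OF einj], auto)
  have splitS: "card (S \<inter> {0..<q}) = (if q \<in> S then card S - 1 else card S)"
    if "S \<subseteq> {0..<k}" for S
  proof (cases "q \<in> S")
    case True
    have "S = insert q (S \<inter> {0..<q})" using that True by (auto simp: k_def)
    then have "card S = Suc (card (S \<inter> {0..<q}))"
      by (metis card_insert_disjoint finite_Int finite_atLeastLessThan Int_iff atLeastLessThan_iff less_irrefl)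
    then show ?thesis using True by simp
  next
    case False
    then have "S \<inter> {0..<q} = S" using that by (force simp: k_def less_Suc_eq)
    then show ?thesis using False by simp
  qed
  have lowdeg: "degree f < t - 1" if "f \<noteq> 0" "f \<in> P" "coeff f (t-1) = 0" for f
  proof -
    have "degree f \<noteq> t - 1" using that(1,3) leading_coeff_0_iff by metis
    then show ?thesis using that(2) unfolding P_def by auto
  qed
  have vanA: "f = 0" if f: "f \<in> P" and S: "S \<subseteq> {0..<k}" "card S = t"
    and z: "\<forall>i\<in>S. row f i = 0" for f S
  proof (rule ccontr)
    assume nz: "f \<noteq> 0"
    have "\<forall>i\<in>S \<inter> {0..<q}. poly f (e i) = 0" using z by (auto simp: row_def)
    then have r: "card (S \<inter> {0..<q}) \<le> degree f" using roots[OF nz] cardR by metis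
    show False
    proof (cases "q \<in> S")
      case True
      then have "coeff f (t-1) = 0" using z by (auto simp: row_def)
      then have "degree f < t - 1" using lowdeg nz f by blast
      then show False using r splitS[OF S(1)] True S(2) by simp
    next
      case False
      then show False using r splitS[OF S(1)] S(2) f by (simp add: P_def)
    qed
  qed
  have vanB: "f = 0" if f: "f \<in> P" and S: "S \<subseteq> {0..<k}" "card S = s"
    and z: "\<forall>i\<in>S \<union> last_col s t k. row f i = 0" for f S
  proof (rule ccontr)
    assume nz: "f \<noteq> 0"
    have cz: "coeff (f mod h) j = 0" if "j < d" for j
    proof -
      have "k + j \<in> last_col s t k" using that by (simp add: last_col_def d_def)
      then have "row f (k + j) = 0" using z by blast
      then show ?thesis using that by (simp add: row_def k_def)
    qed
    have "degree (f mod h) < d" using degree_mod_less[OF hnz, of f] hdeg d2 by auto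
    then have "f mod h = 0"
      by (intro poly_eqI) (metis coeff_0 coeff_eq_0 cz le_less_trans not_le)
    then have fh: "f = h * (f div h)" by (intro dvd_mult_div_cancel[symmetric] mod_0_imp_dvd)
    define g where "g = f div h"
    have gnz: "g \<noteq> 0" using nz fh g_def by auto
    have dg: "degree f = d + degree g" using fh hnz gnz hdeg g_def by (metis degree_mult_eq)
    have "\<forall>i\<in>S \<inter> {0..<q}. poly g (e i) = 0"
    proof
      fix i assume "i \<in> S \<inter> {0..<q}"
      then have "poly f (e i) = 0" using z[rule_format, of i] by (auto simp: row_def)
      then show "poly g (e i) = 0" using hroot fh g_def by (metis mult_eq_0_iff poly_mult)
    qed
    then have r: "card (S \<inter> {0..<q}) \<le> degree g" using roots[OF gnz] cardR by metis
    show False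
    proof (cases "q \<in> S")
      case True
      then have "coeff f (t-1) = 0" using z[rule_format, of q] by (auto simp: row_def)
      then have "degree f < t - 1" using lowdeg nz f by blast
      then show False using r splitS[OF S(1)] True S(2) dg assms by (simp add: d_def)
    next
      case False
      then show False using r splitS[OF S(1)] S(2) f dg assms by (simp add: P_def d_def)
    qed
  qed
  have injI: "inj_on ((\<lambda>x. restrict x I) \<circ> row) P"
    if van: "\<And>f. f \<in> P \<Longrightarrow> \<forall>i\<in>I. row f i = 0 \<Longrightarrow> f = 0" for I
  proof (rule inj_onI)
    fix f g assume f: "f \<in> P" and g: "g \<in> P"
      and eq: "((\<lambda>x. restrict x I) \<circ> row) f = ((\<lambda>x. restrict x I) \<circ> row) g"
    have "\<forall>i\<in>I. row (f - g) i = 0"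
    proof
      fix i assume "i \<in> I"
      then have "row f i = row g i" using fun_cong[OF eq, of i] by simp
      then show "row (f - g) i = 0" by (simp add: row_diff)
    qed
    then have "f - g = 0" using van P_diff[OF f g] by blast
    then show "f = g" by simp
  qed
  have bijI: "bij_betw (\<lambda>x. restrict x I) C (I \<rightarrow>\<^sub>E UNIV)"
    if van: "\<And>f. f \<in> P \<Longrightarrow> \<forall>i\<in>I. row f i = 0 \<Longrightarrow> f = 0"
    and fin: "finite I" and cI: "card I = t" for I
    unfolding C_def
  proof (rule inj_to_bij)
    show "finite (I \<rightarrow>\<^sub>E (UNIV :: 'a set))" using fin by (simp add: finite_PiE)
    show "inj_on ((\<lambda>x. restrict x I) \<circ> row) P" by (rule injI) (rule van)
    show "((\<lambda>x. restrict x I) \<circ> row) ` P \<subseteq> I \<rightarrow>\<^sub>E UNIV" by auto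
    show "card P = card (I \<rightarrow>\<^sub>E (UNIV :: 'a set))"
      using fin cI cardP by (simp add: card_PiE q_def)
  qed
  have "linear_AOA s t k C"
    unfolding linear_AOA_def
  proof (intro conjI allI impI ballI)
    show "1 \<le> s" "s \<le> t" "t \<le> k" using assms tq by (auto simp: k_def)
    show "C \<subseteq> {x. \<forall>i\<ge>k + (t - s). x i = 0}"
      by (auto simp: C_def row_def k_def d_def)
    show "(\<lambda>i. 0) \<in> C"
    proof -
      have "row 0 = (\<lambda>i. 0)" by (auto simp: row_def)
      moreover have "0 \<in> P" using assms by (auto simp: P_def)
      ultimately show ?thesis unfolding C_def by (metis image_eqI)
    qed
    fix x y assume "x \<in> C" "y \<in> C"
    then obtain f g where "f \<in> P" "g \<in> P" "x = row f" "y = row g" by (auto simp: C_def)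
    then show "(\<lambda>i. x i + y i) \<in> C" unfolding C_def
      by (intro image_eqI[of _ _ "f + g"]) (auto simp: row_add P_add)
  next
    fix c x assume "x \<in> C"
    then obtain f where "f \<in> P" "x = row f" by (auto simp: C_def)
    then show "(\<lambda>i. c * x i) \<in> C" unfolding C_def
      by (intro image_eqI[of _ _ "smult c f"]) (auto simp: row_smult P_smult)
  next
    fix S assume "S \<subseteq> {0..<k} \<and> card S = t"
    then show "bij_betw (\<lambda>x. restrict x S) C (S \<rightarrow>\<^sub>E UNIV)"
      using vanA by (intro bijI) (auto intro: finite_subset)
  next
    fix S assume S: "S \<subseteq> {0..<k} \<and> card S = s"
    have fin: "finite S" using S by (auto intro: finite_subset)
    have disj: "S \<inter> last_col s t k = {}" using S by (auto simp: last_col_def)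
    have "card (S \<union> last_col s t k) = t"
      using S fin disj assms by (simp add: card_Un_disjoint last_col_def)
    then show "bij_betw (\<lambda>x. restrict x (S \<union> last_col s t k)) C ((S \<union> last_col s t k) \<rightarrow>\<^sub>E UNIV)"
      using vanB S fin by (intro bijI) (auto simp: last_col_def)
  next
    have st: "{0..<t} \<subseteq> {0..<k} \<and> card {0..<t} = t" using tq by (auto simp: k_def)
    then have "bij_betw (\<lambda>x. restrict x {0..<t}) C ({0..<t} \<rightarrow>\<^sub>E UNIV)"
      using vanA[of _ "{0..<t}"] st by (intro bijI) auto
    then have "card C = card ({0..<t} \<rightarrow>\<^sub>E (UNIV :: 'a set))" by (rule bij_betw_same_card)
    then show "card C = card (UNIV :: 'a set) ^ t" by (simp add: card_PiE)
  qed
  then show ?thesis unfolding k_def q_def by blast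
qed

end
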